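(* Let $\sigma$ be a term ordering on $\mathbb{T}^n$, let $F\subseteq\mathbb{Q}[x_1,\dots,x_n]$ be a set of non-zero polynomials, and let $G_\sigma$ be the reduced $\sigma$-Gröbner basis of the ideal $\langle F\rangle$. Then a prime number $p$ is $\sigma$-Pauer-lucky for $\operatorname{prim}(G_\sigma)$ if and only if $p$ is $\sigma$-good for $\langle F\rangle$.
   Context: $\mathbb{T}^n$ is the monoid of power-products in $x_1,\dots,x_n$; $\mathrm{LC}_\sigma$, $\mathrm{LM}_\sigma$ denote leading coefficient and leading monomial. For $f\in\mathbb{Q}[x_1,\dots,x_n]$, $\operatorname{den}(f)$ is the positive lcm of the denominators of its coefficients; $\operatorname{den}(G)$ is the lcm of $\operatorname{den}(g)$, $g\in G$. A prime $p$ is $\sigma$-good for an ideal $I$ with reduced $\sigma$-Gröbner basis $G_\sigma$ if $p\nmid\operatorname{den}(G_\sigma)$. For non-zero $f$, with $c$ the integer content of $f\cdot\operatorname{den}(f)$, $\operatorname{prim}(f)=c^{-1}f\cdot\operatorname{den}(f)\in\mathbb{Z}[x_1,\dots,x_n]$ and $\operatorname{prim}(G)=\{\operatorname{prim}(g):g\in G\}$. Non-zero $g_1,\dots,g_s\in\mathbb{Z}[x_1,\dots,x_n]$ form a strong $\sigma$-Gröbner basis of $\langle g_1,\dots,g_s\rangle$ if for every non-zero $f$ in this ideal some $\mathrm{LM}_\sigma(g_i)$ divides $\mathrm{LM}_\sigma(f)$; it is minimal if moreover $\mathrm{LM}_\sigma(g_i)\nmid\mathrm{LM}_\sigma(g_j)$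 for $i\neq j$. Given a set $F'$ of non-zero polynomials in $\mathbb{Z}[x_1,\dots,x_n]$ and a minimal strong $\sigma$-Gröbner basis $\tilde G$ of $\langle F'\rangle\subseteq\mathbb{Z}[x_1,\dots,x_n]$, a prime $p$ is $\sigma$-Pauer-lucky for $F'$ if $p$ divides the leading coefficient of no polynomial in $\tilde G$ (this does not depend on the choice of $\tilde G$). *)

theory Defs
  imports Complex_Main "HOL-Library.Poly_Mapping" "HOL-Computational_Algebra.Primes"
begin

type_synonym pp = "nat \<Rightarrow>\<^sub>0 nat"
type_synonym 'a mpoly = "pp \<Rightarrow>\<^sub>0 'a"

text \<open>The monoid T^n of power-products in x_1..x_n (here indexed 0..n-1).\<close>
definition PP :: "nat \<Rightarrow> pp set" where
  "PP n = {t. Poly_Mapping.keys t \<subseteq> {..<n}}"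

definition polys :: "nat \<Rightarrow> ('a::zero) mpoly set" where
  "polys n = {f. Poly_Mapping.keys f \<subseteq> PP n}"

definition pp_dvd :: "pp \<Rightarrow> pp \<Rightarrow> bool" where
  "pp_dvd s t \<longleftrightarrow> (\<forall>i. Poly_Mapping.lookup s i \<le> Poly_Mapping.lookup t i)"

text \<open>A term ordering on T^n (ord s t means s \<le> t): a total order, compatible with
  multiplication, with 1 the least element.\<close>
definition term_order :: "nat \<Rightarrow> (pp \<Rightarrow> pp \<Rightarrow> bool) \<Rightarrow> bool" where
  "term_order n ord \<longleftrightarrow>
     (\<forall>t\<in>PP n. ord t t) \<and>
     (\<forall>s\<in>PP n. \<forall>t\<in>PP n. ord s t \<and> ord t s \<longrightarrow> s = t) \<and>
     (\<forall>s\<in>PP n. \<forall>t\<in>PP n. \<forall>u\<in>PP n. ord s t \<and> ord t u \<longrightarrow> ord s u) \<and>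
     (\<forall>s\<in>PP n. \<forall>t\<in>PP n. ord s t \<or> ord t s) \<and>
     (\<forall>s\<in>PP n. \<forall>t\<in>PP n. \<forall>u\<in>PP n. ord s t \<longrightarrow> ord (s + u) (t + u)) \<and>
     (\<forall>t\<in>PP n. ord 0 t)"

definition lt :: "(pp \<Rightarrow> pp \<Rightarrow> bool) \<Rightarrow> ('a::zero) mpoly \<Rightarrow> pp" where
  "lt ord f = (THE t. t \<in> Poly_Mapping.keys f \<and> (\<forall>s\<in>Poly_Mapping.keys f. ord s t))"

definition lc :: "(pp \<Rightarrow> pp \<Rightarrow> bool) \<Rightarrow> ('a::zero) mpoly \<Rightarrow> 'a" where
  "lc ord f = Poly_Mapping.lookup f (lt ord f)"

definition lm_dvd :: "(pp \<Rightarrow> pp \<Rightarrow> bool) \<Rightarrow> ('a::comm_semiring_1) mpoly \<Rightarrow> 'a mpoly \<Rightarrow> bool" where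
  "lm_dvd ord g f \<longleftrightarrow> lc ord g dvd lc ord f \<and> pp_dvd (lt ord g) (lt ord f)"

inductive_set ideal_gen :: "nat \<Rightarrow> ('a::comm_ring_1) mpoly set \<Rightarrow> 'a mpoly set"
  for n F where
  zero: "0 \<in> ideal_gen n F"
| step: "a \<in> ideal_gen n F \<Longrightarrow> h \<in> polys n \<Longrightarrow> f \<in> F \<Longrightarrow> a + h * f \<in> ideal_gen n F"

definition strong_GB :: "nat \<Rightarrow> (pp \<Rightarrow> pp \<Rightarrow> bool) \<Rightarrow> ('a::comm_ring_1) mpoly set \<Rightarrow> 'a mpoly set \<Rightarrow> bool" where
  "strong_GB n ord G I \<longleftrightarrow> finite G \<and> 0 \<notin> G \<and> G \<subseteq> polys n \<and> ideal_gen n G = I \<and>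
     (\<forall>f\<in>I. f \<noteq> 0 \<longrightarrow> (\<exists>g\<in>G. lm_dvd ord g f))"

definition minimal_strong_GB :: "nat \<Rightarrow> (pp \<Rightarrow> pp \<Rightarrow> bool) \<Rightarrow> ('a::comm_ring_1) mpoly set \<Rightarrow> 'a mpoly set \<Rightarrow> bool" where
  "minimal_strong_GB n ord G I \<longleftrightarrow> strong_GB n ord G I \<and>
     (\<forall>g\<in>G. \<forall>g'\<in>G. g \<noteq> g' \<longrightarrow> \<not> lm_dvd ord g g')"

definition reduced_GB :: "nat \<Rightarrow> (pp \<Rightarrow> pp \<Rightarrow> bool) \<Rightarrow> ('a::field) mpoly set \<Rightarrow> 'a mpoly set \<Rightarrow> bool" where
  "reduced_GB n ord G I \<longleftrightarrow> strong_GB n ord G I \<and> (\<forall>g\<in>G. lc ord g = 1) \<and>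
     (\<forall>g\<in>G. \<forall>g'\<in>G. g \<noteq> g' \<longrightarrow> (\<forall>t\<in>Poly_Mapping.keys g. \<not> pp_dvd (lt ord g') t))"

definition den :: "rat mpoly \<Rightarrow> int" where
  "den f = Lcm ((\<lambda>t. snd (quotient_of (Poly_Mapping.lookup f t))) ` Poly_Mapping.keys f)"

definition den_set :: "rat mpoly set \<Rightarrow> int" where
  "den_set G = Lcm (den ` G)"

definition the_int :: "rat \<Rightarrow> int" where
  "the_int x = (THE k. of_int k = x)"

definition icontent :: "rat mpoly \<Rightarrow> int" where
  "icontent f = Gcd ((\<lambda>t. the_int (of_int (den f) * Poly_Mapping.lookup f t)) ` Poly_Mapping.keys f)"

definition prim :: "rat mpoly \<Rightarrow> int mpoly" where
  "prim f = Poly_Mapping.map (\<lambda>a. the_int (of_int (den f) * a / of_int (icontent f))) f"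

definition sigma_good :: "rat mpoly set \<Rightarrow> nat \<Rightarrow> bool" where
  "sigma_good G p \<longleftrightarrow> \<not> int p dvd den_set G"

definition pauer_lucky :: "nat \<Rightarrow> (pp \<Rightarrow> pp \<Rightarrow> bool) \<Rightarrow> int mpoly set \<Rightarrow> nat \<Rightarrow> bool" where
  "pauer_lucky n ord F' p \<longleftrightarrow>
     (\<exists>Gt. minimal_strong_GB n ord Gt (ideal_gen n F') \<and> (\<forall>g\<in>Gt. \<not> int p dvd lc ord g))"

end

theory Submission
  imports Defs "HOL-Library.Ramsey"
begin

lemma lookup_mult_single:
  "Poly_Mapping.lookup (Poly_Mapping.single s c * f) k =
     (if (\<exists>u. k = s + u) then c * Poly_Mapping.lookup f (k - s) else 0)"
  for f :: "'a::comm_ring_1 mpoly"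
proof -
  have "Poly_Mapping.lookup (Poly_Mapping.single s c * f) k =
        (\<Sum>l. (c when s = l) * (\<Sum>q. Poly_Mapping.lookup f q when k = l + q))"
    by (simp add: lookup_mult lookup_single)
  also have "\<dots> = (\<Sum>l. (c * (\<Sum>q. Poly_Mapping.lookup f q when k = s + q)) when s = l)"
    by (rule Sum_any.cong) (simp add: when_def)
  also have "\<dots> = c * (\<Sum>q. Poly_Mapping.lookup f q when k = s + q)"
    by simp
  also have "\<dots> = (if (\<exists>u. k = s + u) then c * Poly_Mapping.lookup f (k - s) else 0)"
  proof (cases "\<exists>u. k = s + u")
    case True
    then obtain u where u: "k = s + u" by blast
    have "(\<lambda>q. Poly_Mapping.lookup f q when k = s + q) = (\<lambda>q. Poly_Mapping.lookup f u when u = q)"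
      using u by (auto simp: when_def fun_eq_iff)
    then show ?thesis using True u by simp
  next
    case False
    then have "(\<lambda>q. Poly_Mapping.lookup f q when k = s + q) = (\<lambda>q. 0)"
      by (auto simp: when_def fun_eq_iff)
    then show ?thesis using False by simp
  qed
  finally show ?thesis .
qed

lemma lookup_mult_single_add [simp]:
  "Poly_Mapping.lookup (Poly_Mapping.single s c * f) (s + k) = c * Poly_Mapping.lookup f k"
  for f :: "'a::comm_ring_1 mpoly"
  by (simp add: lookup_mult_single)

lemma keys_mult_single:
  "Poly_Mapping.keys (Poly_Mapping.single s c * f) \<subseteq> (\<lambda>t. s + t) ` Poly_Mapping.keys f"
  for f :: "'a::comm_ring_1 mpoly"
proof
  fix k assume "k \<in> Poly_Mapping.keys (Poly_Mapping.single s c * f)"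
  then have "Poly_Mapping.lookup (Poly_Mapping.single s c * f) k \<noteq> 0" by (simp add: in_keys_iff)
  then obtain u where u: "k = s + u" and "c * Poly_Mapping.lookup f u \<noteq> 0"
    by (auto simp: lookup_mult_single split: if_splits)
  then show "k \<in> (\<lambda>t. s + t) ` Poly_Mapping.keys f" by (intro image_eqI[of _ _ u]) (auto simp: in_keys_iff)
qed

lemma lookup_scale0 [simp]:
  "Poly_Mapping.lookup (Poly_Mapping.single 0 c * f) k = c * Poly_Mapping.lookup f k"
  for f :: "'a::comm_ring_1 mpoly"
  using lookup_mult_single_add[of 0 c f k] by simp

lemma pp_dvd_iff: "pp_dvd s t \<longleftrightarrow> (\<exists>u. t = s + u)"
proof
  assume "pp_dvd s t"
  then have "t = s + (t - s)"
    by (auto simp: pp_dvd_def poly_mapping_eq_iff lookup_add lookup_minus fun_eq_iff)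
  then show "\<exists>u. t = s + u" by blast
qed (auto simp: pp_dvd_def lookup_add)

lemma PP_add: "s \<in> PP n \<Longrightarrow> t \<in> PP n \<Longrightarrow> s + t \<in> PP n"
  unfolding PP_def using keys_add[of s t] by auto

lemma PP_summand: "s + u \<in> PP n \<Longrightarrow> u \<in> PP n"
  unfolding PP_def by (auto simp: in_keys_iff lookup_add subset_iff)

lemma PP_zero [simp]: "0 \<in> PP n"
  by (simp add: PP_def)

lemma no_desc_nat:
  fixes g :: "nat \<Rightarrow> nat"
  assumes "infinite Y" "\<forall>i\<in>Y. \<forall>j\<in>Y. i < j \<longrightarrow> g j < g i"
  shows False
proof -
  have "Y \<noteq> {}" using assms(1) by auto
  then obtain y where "y \<in> Y" by blast
  then obtain i where i: "i \<in> Y" "\<forall>j. j \<in> Y \<longrightarrow> g i \<le> g j"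
    using ex_has_least_nat[of "\<lambda>x. x \<in> Y" y g] by blast
  obtain j where "j > i" "j \<in> Y" using assms(1) by (meson infinite_nat_iff_unbounded)
  then have "g j < g i" using i(1) assms(2) by blast
  then show False using i(2) \<open>j \<in> Y\<close> by (simp add: not_less[symmetric])
qed

lemma dickson_step:
  fixes F :: "nat \<Rightarrow> pp"
  assumes "infinite H"
  shows "\<exists>H'\<subseteq>H. infinite H' \<and> (\<forall>i\<in>H'. \<forall>j\<in>H'. i < j \<longrightarrow> Poly_Mapping.lookup (F i) k \<le> Poly_Mapping.lookup (F j) k)"
proof -
  define c where "c X = (if \<exists>i j. X = {i,j} \<and> i < j \<and> Poly_Mapping.lookup (F i) k \<le> Poly_Mapping.lookup (F j) k then 0 else (1::nat))" for X :: "nat set"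
  have "\<forall>x\<in>H. \<forall>y\<in>H. x \<noteq> y \<longrightarrow> c {x, y} < 2" by (simp add: c_def)
  from Ramsey2[OF assms this] obtain Y t where Y: "Y \<subseteq> H" "infinite Y" "t < 2"
    "\<forall>x\<in>Y. \<forall>y\<in>Y. x \<noteq> y \<longrightarrow> c {x, y} = t" by blast
  show ?thesis
  proof (cases "t = 0")
    case True
    have "\<forall>i\<in>Y. \<forall>j\<in>Y. i < j \<longrightarrow> Poly_Mapping.lookup (F i) k \<le> Poly_Mapping.lookup (F j) k"
    proof (intro ballI impI)
      fix i j assume ij: "i \<in> Y" "j \<in> Y" "i < j"
      then have "c {i, j} = 0" using Y(4) True by auto
      then obtain i' j' where "{i, j} = {i', j'}" "i' < j'" "Poly_Mapping.lookup (F i') k \<le> Poly_Mapping.lookup (F j') k"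
        unfolding c_def by (auto split: if_splits)
      moreover have "i' = i \<and> j' = j" using calculation ij unfolding doubleton_eq_iff by auto
      ultimately show "Poly_Mapping.lookup (F i) k \<le> Poly_Mapping.lookup (F j) k" by simp
    qed
    then show ?thesis using Y by blast
  next
    case False
    have "\<forall>i\<in>Y. \<forall>j\<in>Y. i < j \<longrightarrow> Poly_Mapping.lookup (F j) k < Poly_Mapping.lookup (F i) k"
    proof (intro ballI impI)
      fix i j assume ij: "i \<in> Y" "j \<in> Y" "i < j"
      then have "c {i, j} \<noteq> 0" using Y(4) False by auto
      then have "\<not> (\<exists>i' j'. {i, j} = {i', j'} \<and> i' < j' \<and> Poly_Mapping.lookup (F i') k \<le> Poly_Mapping.lookup (F j') k)"
        unfolding c_def by (simp split: if_splits)
      then show "Poly_Mapping.lookup (F j) k < Poly_Mapping.lookup (F i) k"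
        using ij not_le by blast
    qed
    then show ?thesis using no_desc_nat[OF Y(2), of "\<lambda>i. Poly_Mapping.lookup (F i) k"] by blast
  qed
qed

lemma dickson_upto:
  fixes F :: "nat \<Rightarrow> pp"
  assumes "infinite H"
  shows "\<exists>H'\<subseteq>H. infinite H' \<and> (\<forall>i\<in>H'. \<forall>j\<in>H'. i < j \<longrightarrow> (\<forall>k<m. Poly_Mapping.lookup (F i) k \<le> Poly_Mapping.lookup (F j) k))"
proof (induction m)
  case 0
  then show ?case using assms by blast
next
  case (Suc m)
  then obtain H1 where H1: "H1 \<subseteq> H" "infinite H1"
    "\<forall>i\<in>H1. \<forall>j\<in>H1. i < j \<longrightarrow> (\<forall>k<m. Poly_Mapping.lookup (F i) k \<le> Poly_Mapping.lookup (F j) k)" by blast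
  from dickson_step[OF H1(2), where F=F and k=m] obtain H2 where H2: "H2 \<subseteq> H1" "infinite H2"
    "\<forall>i\<in>H2. \<forall>j\<in>H2. i < j \<longrightarrow> Poly_Mapping.lookup (F i) m \<le> Poly_Mapping.lookup (F j) m" by blast
  show ?case
    apply (rule exI[of _ H2])
    using H1 H2 by (auto simp: less_Suc_eq)
qed

lemma dickson:
  fixes F :: "nat \<Rightarrow> pp"
  assumes "infinite H" "\<And>i. F i \<in> PP n"
  shows "\<exists>H'\<subseteq>H. infinite H' \<and> (\<forall>i\<in>H'. \<forall>j\<in>H'. i < j \<longrightarrow> pp_dvd (F i) (F j))"
proof -
  from dickson_upto[OF assms(1), where F=F and m=n] obtain H' where H': "H' \<subseteq> H" "infinite H'"
    "\<forall>i\<in>H'. \<forall>j\<in>H'. i < j \<longrightarrow> (\<forall>k<n. Poly_Mapping.lookup (F i) k \<le> Poly_Mapping.lookup (F j) k)" by blast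
  have "Poly_Mapping.lookup (F i) k = 0" if "\<not> k < n" for i k
    using assms(2)[of i] that unfolding PP_def by (auto simp: in_keys_iff)
  have "\<forall>i\<in>H'. \<forall>j\<in>H'. i < j \<longrightarrow> pp_dvd (F i) (F j)"
  proof (intro ballI impI)
    fix i j assume ij: "i \<in> H'" "j \<in> H'" "i < j"
    show "pp_dvd (F i) (F j)" unfolding pp_dvd_def
    proof
      fix k show "Poly_Mapping.lookup (F i) k \<le> Poly_Mapping.lookup (F j) k"
      proof (cases "k < n")
        case True then show ?thesis using H'(3) ij by blast
      next
        case False then show ?thesis using \<open>\<And>i k. \<not> k < n \<Longrightarrow> Poly_Mapping.lookup (F i) k = 0\<close> by simp
      qed
    qed
  qed
  then show ?thesis using H' by blast
qed


locale TOrd =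
  fixes n :: nat and ord :: "pp \<Rightarrow> pp \<Rightarrow> bool"
  assumes TO: "term_order n ord"
begin

lemma to_refl: "t \<in> PP n \<Longrightarrow> ord t t" using TO unfolding term_order_def by blast
lemma to_antisym: "s \<in> PP n \<Longrightarrow> t \<in> PP n \<Longrightarrow> ord s t \<Longrightarrow> ord t s \<Longrightarrow> s = t"
  using TO unfolding term_order_def by blast
lemma to_trans: "s \<in> PP n \<Longrightarrow> t \<in> PP n \<Longrightarrow> u \<in> PP n \<Longrightarrow> ord s t \<Longrightarrow> ord t u \<Longrightarrow> ord s u"
  using TO unfolding term_order_def by blast
lemma to_total: "s \<in> PP n \<Longrightarrow> t \<in> PP n \<Longrightarrow> ord s t \<or> ord t s"
  using TO unfolding term_order_def by blast
lemma to_mono: "s \<in> PP n \<Longrightarrow> t \<in> PP n \<Longrightarrow> u \<in> PP n \<Longrightarrow> ord s t \<Longrightarrow> ord (u + s) (u + t)"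
  using TO unfolding term_order_def by (metis add.commute)
lemma to_zero: "t \<in> PP n \<Longrightarrow> ord 0 t"
  using TO unfolding term_order_def by blast

lemma to_dvd: "s \<in> PP n \<Longrightarrow> u \<in> PP n \<Longrightarrow> ord s (s + u)"
  using to_mono[of 0 u s] to_zero[of u] by simp

lemma to_dvd': "pp_dvd s t \<Longrightarrow> t \<in> PP n \<Longrightarrow> ord s t"
proof -
  assume "pp_dvd s t" "t \<in> PP n"
  then obtain u where u: "t = s + u" using pp_dvd_iff by blast
  then have "s \<in> PP n" "u \<in> PP n" using \<open>t \<in> PP n\<close> PP_summand[of s u] PP_summand[of u s] by (auto simp: add.commute)
  then show "ord s t" using to_dvd u by blast
qed

definition lessO :: "pp \<Rightarrow> pp \<Rightarrow> bool" where
  "lessO s t \<longleftrightarrow> ord s t \<and> s \<noteq> t"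

lemma lessO_trans: "s \<in> PP n \<Longrightarrow> t \<in> PP n \<Longrightarrow> u \<in> PP n \<Longrightarrow> lessO s t \<Longrightarrow> lessO t u \<Longrightarrow> lessO s u"
  unfolding lessO_def using to_trans to_antisym by blast

lemma lessO_ord_trans: "s \<in> PP n \<Longrightarrow> t \<in> PP n \<Longrightarrow> u \<in> PP n \<Longrightarrow> lessO s t \<Longrightarrow> ord t u \<Longrightarrow> lessO s u"
  unfolding lessO_def using to_trans to_antisym by blast

lemma ord_lessO_trans: "s \<in> PP n \<Longrightarrow> t \<in> PP n \<Longrightarrow> u \<in> PP n \<Longrightarrow> ord s t \<Longrightarrow> lessO t u \<Longrightarrow> lessO s u"
  unfolding lessO_def using to_trans to_antisym by blast

lemma lessO_not_ord: "s \<in> PP n \<Longrightarrow> t \<in> PP n \<Longrightarrow> lessO s t \<longleftrightarrow> \<not> ord t s"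
  unfolding lessO_def using to_total to_antisym to_refl by blast

definition lessR :: "(pp \<times> pp) set" where
  "lessR = {(s, t). s \<in> PP n \<and> t \<in> PP n \<and> lessO s t}"

lemma wf_lessR: "wf lessR"
proof (rule ccontr)
  assume "\<not> wf lessR"
  then obtain F where F: "\<And>i. (F (Suc i), F i) \<in> lessR"
    unfolding wf_iff_no_infinite_down_chain by blast
  have PPF: "F i \<in> PP n" for i using F[of i] unfolding lessR_def by auto
  have desc: "lessO (F j) (F i)" if "i < j" for i j
    using that
  proof (induction j)
    case 0 then show ?case by simp
  next
    case (Suc j)
    have 1: "lessO (F (Suc j)) (F j)" using F[of j] unfolding lessR_def by auto
    show ?case
    proof (cases "i = j")
      case True then show ?thesis using 1 by simp
    next
      case False
      then have "lessO (F j) (F i)" using Suc by simp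
      then show ?thesis using 1 lessO_trans PPF by blast
    qed
  qed
  obtain H where H: "infinite H" "\<forall>i\<in>H. \<forall>j\<in>H. i < j \<longrightarrow> pp_dvd (F i) (F j)"
    using dickson[of UNIV F n] PPF by blast
  have "H \<noteq> {}" using H(1) by auto
  then obtain i where i: "i \<in> H" by blast
  obtain j where "j > i" "j \<in> H" using H(1) by (meson infinite_nat_iff_unbounded)
  then have "pp_dvd (F i) (F j)" "lessO (F j) (F i)" using H i desc by auto
  then show False using to_dvd' PPF lessO_not_ord by blast
qed

lemma finite_max:
  assumes "finite S" "S \<noteq> {}" "S \<subseteq> PP n"
  shows "\<exists>t\<in>S. \<forall>s\<in>S. ord s t"
  using assms
proof (induction S rule: finite_ne_induct)
  case (singleton x) then show ?case using to_refl by auto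
next
  case (insert x F)
  then obtain t where t: "t \<in> F" "\<forall>s\<in>F. ord s t" by auto
  show ?case
  proof (cases "ord x t")
    case True then show ?thesis using t by auto
  next
    case False
    then have "ord t x" using to_total insert t by blast
    have "x \<in> PP n" "t \<in> PP n" "F \<subseteq> PP n" using insert t by auto
    then have "\<forall>s\<in>F. ord s x" using t \<open>ord t x\<close> to_trans by blast
    then show ?thesis using to_refl \<open>x \<in> PP n\<close> by auto
  qed
qed

lemma keys_polys: "f \<in> polys n \<Longrightarrow> Poly_Mapping.keys f \<subseteq> PP n"
  by (simp add: polys_def)

lemma lt_props:
  assumes "f \<in> polys n" "f \<noteq> 0"
  shows "lt ord f \<in> Poly_Mapping.keys f" "\<forall>s\<in>Poly_Mapping.keys f. ord s (lt ord f)"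
proof -
  have "Poly_Mapping.keys f \<noteq> {}" using assms(2) by simp
  then obtain t where t: "t \<in> Poly_Mapping.keys f" "\<forall>s\<in>Poly_Mapping.keys f. ord s t"
    using finite_max[of "Poly_Mapping.keys f"] keys_polys[OF assms(1)] by auto
  have "\<exists>!t. t \<in> Poly_Mapping.keys f \<and> (\<forall>s\<in>Poly_Mapping.keys f. ord s t)"
  proof (rule ex1I[of _ t])
    fix t' assume "t' \<in> Poly_Mapping.keys f \<and> (\<forall>s\<in>Poly_Mapping.keys f. ord s t')"
    then show "t' = t" using t to_antisym keys_polys[OF assms(1)] by blast
  qed (use t in auto)
  then have "lt ord f \<in> Poly_Mapping.keys f \<and> (\<forall>s\<in>Poly_Mapping.keys f. ord s (lt ord f))"
    unfolding lt_def by (rule theI')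
  then show "lt ord f \<in> Poly_Mapping.keys f" "\<forall>s\<in>Poly_Mapping.keys f. ord s (lt ord f)" by auto
qed

lemma lt_eqI:
  assumes "f \<in> polys n" "t \<in> Poly_Mapping.keys f" "\<forall>s\<in>Poly_Mapping.keys f. ord s t"
  shows "lt ord f = t"
proof -
  have "f \<noteq> 0" using assms(2) by auto
  from lt_props[OF assms(1) this] have "lt ord f \<in> PP n" "t \<in> PP n" "ord t (lt ord f)" "ord (lt ord f) t"
    using assms keys_polys[OF assms(1)] by auto
  then show ?thesis using to_antisym by blast
qed

lemma lt_PP: "f \<in> polys n \<Longrightarrow> f \<noteq> 0 \<Longrightarrow> lt ord f \<in> PP n"
  using lt_props keys_polys by blast

lemma lc_nz: "f \<in> polys n \<Longrightarrow> f \<noteq> 0 \<Longrightarrow> lc ord f \<noteq> 0"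
  using lt_props(1) unfolding lc_def by (simp add: in_keys_iff)

lemma key_le_lt: "f \<in> polys n \<Longrightarrow> s \<in> Poly_Mapping.keys f \<Longrightarrow> ord s (lt ord f)"
  using lt_props(2) by fastforce

lemma cancel_lt:
  assumes "h \<in> polys n" "T \<in> PP n" "\<forall>k\<in>Poly_Mapping.keys h. ord k T" "Poly_Mapping.lookup h T = 0" "h \<noteq> 0"
  shows "lessO (lt ord h) T"
proof -
  have "lt ord h \<in> Poly_Mapping.keys h" using lt_props assms by blast
  then show ?thesis using assms unfolding lessO_def by (auto simp: in_keys_iff)
qed

end

lemma keys_minus_sub: "Poly_Mapping.keys (f - g) \<subseteq> Poly_Mapping.keys f \<union> Poly_Mapping.keys g"
  for f g :: "'a::ab_group_add mpoly"
  by (auto simp: in_keys_iff lookup_minus)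

lemma keys_uminus_eq: "Poly_Mapping.keys (- f) = Poly_Mapping.keys f"
  for f :: "'a::ab_group_add mpoly"
  by (auto simp: in_keys_iff)

lemma polys_zero [simp]: "0 \<in> polys n" by (simp add: polys_def)
lemma polys_add: "f \<in> polys n \<Longrightarrow> g \<in> polys n \<Longrightarrow> f + g \<in> polys n"
  using keys_add[of f g] by (auto simp: polys_def)
lemma polys_minus: "f \<in> polys n \<Longrightarrow> g \<in> polys n \<Longrightarrow> f - g \<in> polys n"
  for f g :: "'a::ab_group_add mpoly"
  using keys_minus_sub[of f g] by (auto simp: polys_def)
lemma polys_uminus: "f \<in> polys n \<Longrightarrow> - f \<in> polys n"
  for f :: "'a::ab_group_add mpoly"
  by (simp add: polys_def keys_uminus_eq)
lemma polys_single: "t \<in> PP n \<Longrightarrow> Poly_Mapping.single t c \<in> polys n"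
  by (simp add: polys_def)
lemma polys_one [simp]: "(1 :: 'a::comm_ring_1 mpoly) \<in> polys n"
  by (simp add: polys_def)
lemma polys_mult: "f \<in> polys n \<Longrightarrow> g \<in> polys n \<Longrightarrow> f * g \<in> polys n"
  for f g :: "'a::comm_ring_1 mpoly"
proof -
  assume fg: "f \<in> polys n" "g \<in> polys n"
  have "k \<in> PP n" if kk: "k \<in> Poly_Mapping.keys (f * g)" for k
  proof -
    obtain a b where "a \<in> Poly_Mapping.keys f" "b \<in> Poly_Mapping.keys g" "k = a + b"
      using keys_mult[of f g] kk by blast
    then show ?thesis using fg PP_add unfolding polys_def by blast
  qed
  then show ?thesis unfolding polys_def by blast
qed

lemma ideal_add:
  assumes "a \<in> ideal_gen n F" "b \<in> ideal_gen n F" shows "a + b \<in> ideal_gen n F"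
  using assms(2)
proof (induction b rule: ideal_gen.induct)
  case zero then show ?case using assms(1) by simp
next
  case (step b h f)
  then have "(a + b) + h * f \<in> ideal_gen n F" by (intro ideal_gen.step)
  then show ?case by (simp add: add.assoc)
qed

lemma ideal_mult:
  assumes "a \<in> ideal_gen n F" "h \<in> polys n" shows "h * a \<in> ideal_gen n F"
  using assms(1)
proof (induction a rule: ideal_gen.induct)
  case zero then show ?case by (simp add: ideal_gen.zero)
next
  case (step a h' f)
  then have "h * a + (h * h') * f \<in> ideal_gen n F"
    using assms(2) by (intro ideal_gen.step polys_mult)
  then show ?case by (simp add: algebra_simps)
qed

lemma ideal_uminus:
  assumes "a \<in> ideal_gen n F" shows "- a \<in> ideal_gen n F"
proof -
  have "(- 1) * a \<in> ideal_gen n F"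
    using ideal_mult[OF assms, where h="- 1"] polys_uminus[OF polys_one] by blast
  then show ?thesis by simp
qed

lemma ideal_diff:
  assumes "a \<in> ideal_gen n F" "b \<in> ideal_gen n F" shows "a - b \<in> ideal_gen n F"
proof -
  have "a + (- b) \<in> ideal_gen n F" using ideal_add[OF assms(1) ideal_uminus[OF assms(2)]] .
  then show ?thesis by simp
qed

lemma ideal_gen_F:
  assumes "f \<in> F" shows "f \<in> ideal_gen n F"
proof -
  have "0 + 1 * f \<in> ideal_gen n F" by (rule ideal_gen.step[OF ideal_gen.zero polys_one assms])
  then show ?thesis by simp
qed

lemma ideal_polys: "F \<subseteq> polys n \<Longrightarrow> ideal_gen n F \<subseteq> polys n"
proof
  fix a assume F: "F \<subseteq> polys n" and a: "a \<in> ideal_gen n F"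
  from a show "a \<in> polys n"
  proof (induction a rule: ideal_gen.induct)
    case zero then show ?case by simp
  next
    case (step a h f) then show ?case using polys_add polys_mult F by blast
  qed
qed

lemma ideal_gen_mono: "F \<subseteq> ideal_gen n F' \<Longrightarrow> ideal_gen n F \<subseteq> ideal_gen n F'"
proof
  fix a assume F: "F \<subseteq> ideal_gen n F'" and a: "a \<in> ideal_gen n F"
  from a show "a \<in> ideal_gen n F'"
  proof (induction a rule: ideal_gen.induct)
    case zero then show ?case by (rule ideal_gen.zero)
  next
    case (step a h f) then show ?case using ideal_add ideal_mult F by blast
  qed
qed

context TOrd
begin

lemma lt_mult_single:
  fixes f :: "'a::idom mpoly"
  assumes "f \<in> polys n" "f \<noteq> 0" "s \<in> PP n" "c \<noteq> 0"
  shows "Poly_Mapping.single s c * f \<noteq> 0" "lt ord (Poly_Mapping.single s c * f) = s + lt ord f"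
    "lc ord (Poly_Mapping.single s c * f) = c * lc ord f"
proof -
  let ?g = "Poly_Mapping.single s c * f"
  have lcnz: "lc ord f \<noteq> 0" using lc_nz assms by blast
  have l: "Poly_Mapping.lookup ?g (s + lt ord f) = c * lc ord f" by (simp add: lc_def)
  then have k: "s + lt ord f \<in> Poly_Mapping.keys ?g" using lcnz assms(4) by (simp add: in_keys_iff)
  then show "?g \<noteq> 0" by auto
  have gp: "?g \<in> polys n" using polys_mult polys_single assms by blast
  have "\<forall>k\<in>Poly_Mapping.keys ?g. ord k (s + lt ord f)"
  proof
    fix k assume "k \<in> Poly_Mapping.keys ?g"
    then obtain t where t: "t \<in> Poly_Mapping.keys f" "k = s + t" using keys_mult_single by blast
    then show "ord k (s + lt ord f)"
      proof -
      have "t \<in> PP n" using t(1) keys_polys[OF assms(1)] by blast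
      moreover have "lt ord f \<in> PP n" using lt_PP assms(1,2) by blast
      moreover have "ord t (lt ord f)" using key_le_lt[OF assms(1) t(1)] .
      ultimately show ?thesis using to_mono[of t "lt ord f" s] assms(3) t(2) by simp
    qed
  qed
  then show lt: "lt ord ?g = s + lt ord f" using lt_eqI[OF gp k] by blast
  show "lc ord ?g = c * lc ord f" using l lt by (simp add: lc_def)
qed

end

definition iota :: "int mpoly \<Rightarrow> rat mpoly" where
  "iota f = Poly_Mapping.map of_int f"

lemma lookup_map_gen: "g 0 = 0 \<Longrightarrow> Poly_Mapping.lookup (Poly_Mapping.map g f) t = g (Poly_Mapping.lookup f t)"
  by (simp add: Poly_Mapping.map.rep_eq when_def)

lemma lookup_iota [simp]: "Poly_Mapping.lookup (iota f) t = of_int (Poly_Mapping.lookup f t)"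
  by (simp add: iota_def lookup_map_gen)

lemma keys_iota [simp]: "Poly_Mapping.keys (iota f) = Poly_Mapping.keys f"
  by (auto simp: in_keys_iff)

lemma iota_eq_iff: "iota f = iota g \<longleftrightarrow> f = g"
  by (auto simp: poly_mapping_eq_iff fun_eq_iff)

lemma iota_zero [simp]: "iota 0 = 0"
  by (simp add: poly_mapping_eq_iff fun_eq_iff)

lemma iota_eq_0 [simp]: "iota f = 0 \<longleftrightarrow> f = 0"
  using iota_eq_iff[of f 0] by simp

lemma iota_add: "iota (f + g) = iota f + iota g"
  by (simp add: poly_mapping_eq_iff fun_eq_iff lookup_add)

lemma iota_diff: "iota (f - g) = iota f - iota g"
  by (simp add: poly_mapping_eq_iff fun_eq_iff lookup_minus)

lemma iota_single: "iota (Poly_Mapping.single s c) = Poly_Mapping.single s (of_int c)"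
  by (simp add: poly_mapping_eq_iff fun_eq_iff lookup_single when_def)

lemma of_int_Sum_any: "(of_int (Sum_any g) :: rat) = Sum_any (\<lambda>a. of_int (g a))"
proof -
  have "{a. (of_int (g a) :: rat) \<noteq> 0} = {a. g a \<noteq> 0}" by simp
  then show ?thesis by (simp add: Sum_any.expand_set)
qed

lemma of_int_if0 [simp]: "(of_int (if P then a else 0) :: rat) = (if P then of_int a else 0)"
  by simp

lemma iota_mult: "iota (f * g) = iota f * iota g"
proof (rule poly_mapping_eqI)
  fix k
  have "Poly_Mapping.lookup (iota (f * g)) k =
     of_int (\<Sum>l. Poly_Mapping.lookup f l * (\<Sum>q. Poly_Mapping.lookup g q when k = l + q))"
    by (simp add: lookup_mult)
  also have "\<dots> = (\<Sum>l. of_int (Poly_Mapping.lookup f l) * (\<Sum>q. of_int (Poly_Mapping.lookup g q) when k = l + q))"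
    by (simp add: of_int_Sum_any when_def)
  also have "\<dots> = Poly_Mapping.lookup (iota f * iota g) k"
    by (simp add: lookup_mult)
  finally show "Poly_Mapping.lookup (iota (f * g)) k = Poly_Mapping.lookup (iota f * iota g) k" .
qed

lemma iota_polys: "f \<in> polys n \<Longrightarrow> iota f \<in> polys n"
  by (simp add: polys_def)

lemma (in TOrd) lt_iota: "f \<in> polys n \<Longrightarrow> lt ord (iota f) = lt ord f"
  by (simp add: lt_def)

lemma (in TOrd) lc_iota: "f \<in> polys n \<Longrightarrow> lc ord (iota f) = of_int (lc ord f)"
  by (simp add: lc_def lt_def)

definition the_int' :: "rat \<Rightarrow> int" where "the_int' = the_int"

lemma the_int_of_int [simp]: "the_int (of_int k) = k"
  unfolding the_int_def by (rule the_equality) auto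

lemma den_mult_int:
  assumes "snd (quotient_of x) dvd D"
  shows "of_int D * x = of_int (fst (quotient_of x) * (D div snd (quotient_of x)))"
proof -
  obtain a b where ab: "quotient_of x = (a, b)" by (cases "quotient_of x") auto
  then have x: "x = of_int a / of_int b" and b: "b > 0" using quotient_of_div quotient_of_denom_pos by auto
  obtain k where k: "D = b * k" using assms ab by (auto elim: dvdE)
  have "of_int D * x = of_int a * of_int k" using b by (simp add: x k field_simps)
  then show ?thesis using ab k b by simp
qed

definition pint :: "nat \<Rightarrow> rat \<Rightarrow> bool" where
  "pint p x \<longleftrightarrow> (\<exists>a b. b \<noteq> 0 \<and> \<not> int p dvd b \<and> x = of_int a / of_int b)"

lemma pint_int: "prime p \<Longrightarrow> pint p (of_int a)"
  unfolding pint_def by (rule exI[of _ a], rule exI[of _ 1]) (auto simp: zdvd1_eq)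

lemma pint_add:
  assumes "prime p" "pint p x" "pint p y" shows "pint p (x + y)"
proof -
  obtain a b where x: "b \<noteq> 0" "\<not> int p dvd b" "x = of_int a / of_int b" using assms(2) pint_def by blast
  obtain c d where y: "d \<noteq> 0" "\<not> int p dvd d" "y = of_int c / of_int d" using assms(3) pint_def by blast
  have pr: "prime (int p)" using assms(1) by simp
  have "\<not> int p dvd b * d" using x y prime_dvd_mult_iff[OF pr] by blast
  moreover have "x + y = of_int (a * d + c * b) / of_int (b * d)" using x y by (simp add: field_simps)
  ultimately show ?thesis unfolding pint_def using x y by (intro exI[of _ "a * d + c * b"] exI[of _ "b * d"]) simp
qed

lemma pint_mult:
  assumes "prime p" "pint p x" "pint p y" shows "pint p (x * y)"
proof -
  obtain a b where x: "b \<noteq> 0" "\<not> int p dvd b" "x = of_int a / of_int b" using assms(2) pint_def by blast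
  obtain c d where y: "d \<noteq> 0" "\<not> int p dvd d" "y = of_int c / of_int d" using assms(3) pint_def by blast
  have pr: "prime (int p)" using assms(1) by simp
  have "\<not> int p dvd b * d" using x y prime_dvd_mult_iff[OF pr] by blast
  moreover have "x * y = of_int (a * c) / of_int (b * d)" using x y by (simp add: field_simps)
  ultimately show ?thesis unfolding pint_def using x y by (intro exI[of _ "a * c"] exI[of _ "b * d"]) simp
qed

lemma pint_uminus: "pint p x \<Longrightarrow> pint p (- x)"
  unfolding pint_def by (metis minus_divide_left of_int_minus)

lemma pint_diff: "prime p \<Longrightarrow> pint p x \<Longrightarrow> pint p y \<Longrightarrow> pint p (x - y)"
  using pint_add[of p x "- y"] pint_uminus[of p y] by simp

lemma pint_div_int:
  assumes "prime p" "pint p x" "b \<noteq> 0" "\<not> int p dvd b" shows "pint p (x / of_int b)"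
proof -
  obtain a d where x: "d \<noteq> 0" "\<not> int p dvd d" "x = of_int a / of_int d" using assms(2) pint_def by blast
  have pr: "prime (int p)" using assms(1) by simp
  have "\<not> int p dvd d * b" using x assms prime_dvd_mult_iff[OF pr] by blast
  moreover have "x / of_int b = of_int a / of_int (d * b)" using x by simp
  ultimately show ?thesis unfolding pint_def using x assms by (intro exI[of _ a] exI[of _ "d * b"]) simp
qed

lemma pint_den:
  assumes "pint p x" shows "\<not> int p dvd snd (quotient_of x)"
proof
  assume pd: "int p dvd snd (quotient_of x)"
  obtain a b where x: "b \<noteq> 0" "\<not> int p dvd b" "x = of_int a / of_int b" using assms pint_def by blast
  obtain a' b' where ab: "quotient_of x = (a', b')" by (cases "quotient_of x") auto
  then have x': "x = of_int a' / of_int b'" "b' > 0" "coprime a' b'"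
    using quotient_of_div quotient_of_denom_pos quotient_of_coprime by auto
  have "of_int a' * of_int b = (of_int a * of_int b' :: rat)" using x x' by (simp add: field_simps)
  then have eq: "a' * b = a * b'" using of_int_eq_iff by (metis of_int_mult)
  then have "b' dvd a' * b" by simp
  then have "b' dvd b" using x'(3) by (simp add: coprime_commute coprime_dvd_mult_right_iff)
  then show False using pd ab x(2) dvd_trans by auto
qed

abbreviation dens :: "rat mpoly \<Rightarrow> int set" where
  "dens f \<equiv> (\<lambda>t. snd (quotient_of (Poly_Mapping.lookup f t))) ` Poly_Mapping.keys f"

lemma den_pos: "den f > 0"
proof -
  have fin: "finite (dens f)" by simp
  have "0 \<notin> dens f"
  proof
    assume "0 \<in> dens f"
    then obtain t where "snd (quotient_of (Poly_Mapping.lookup f t)) = 0" by auto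
    then show False using quotient_of_denom_pos'[of "Poly_Mapping.lookup f t"] by simp
  qed
  then have "den f \<noteq> 0" unfolding den_def using Lcm_0_iff[OF fin] by simp
  moreover have "den f \<ge> 0" unfolding den_def by simp
  ultimately show ?thesis by simp
qed

lemma den_dvd: "snd (quotient_of (Poly_Mapping.lookup f t)) dvd den f"
proof (cases "t \<in> Poly_Mapping.keys f")
  case True then show ?thesis unfolding den_def by (intro dvd_Lcm) simp
next
  case False then show ?thesis by (simp add: in_keys_iff)
qed

definition M :: "rat mpoly \<Rightarrow> pp \<Rightarrow> int" where
  "M f t = the_int (of_int (den f) * Poly_Mapping.lookup f t)"

lemma M_eq: "of_int (M f t) = of_int (den f) * Poly_Mapping.lookup f t"
proof -
  obtain K where e: "of_int (den f) * Poly_Mapping.lookup f t = (of_int K :: rat)"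
    using den_mult_int[OF den_dvd[of f t]] by blast
  then have "M f t = K" by (simp only: M_def e the_int_of_int)
  then show ?thesis using e by simp
qed

lemma M_nz: "t \<in> Poly_Mapping.keys f \<Longrightarrow> M f t \<noteq> 0"
proof
  assume "t \<in> Poly_Mapping.keys f" "M f t = 0"
  then have "(of_int (den f) * Poly_Mapping.lookup f t :: rat) = 0" using M_eq[of f t] by simp
  then show False using den_pos[of f] \<open>t \<in> Poly_Mapping.keys f\<close> by (simp add: in_keys_iff)
qed

lemma icontent_M: "icontent f = Gcd (M f ` Poly_Mapping.keys f)"
  unfolding icontent_def M_def ..

lemma icontent_dvd: "t \<in> Poly_Mapping.keys f \<Longrightarrow> icontent f dvd M f t"
  unfolding icontent_M by (rule Gcd_dvd) simp

lemma icontent_pos: "f \<noteq> 0 \<Longrightarrow> icontent f > 0"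
proof -
  assume "f \<noteq> 0"
  then have "Poly_Mapping.keys f \<noteq> {}" by simp
  then obtain t where t: "t \<in> Poly_Mapping.keys f" by blast
  then have "M f t \<noteq> 0" by (rule M_nz)
  then have "icontent f \<noteq> 0" unfolding icontent_M using t by (auto simp: Gcd_0_iff)
  moreover have "icontent f \<ge> 0" unfolding icontent_M by simp
  ultimately show ?thesis by simp
qed

definition kprim :: "rat mpoly \<Rightarrow> rat" where
  "kprim f = of_int (den f) / of_int (icontent f)"

lemma kprim_nz: "f \<noteq> 0 \<Longrightarrow> kprim f \<noteq> 0"
  unfolding kprim_def using den_pos[of f] icontent_pos[of f] by simp

lemma lookup_prim_rat:
  assumes "f \<noteq> 0"
  shows "of_int (Poly_Mapping.lookup (prim f) t) = kprim f * Poly_Mapping.lookup f t"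
proof -
  have g0: "the_int (of_int (den f) * 0 / of_int (icontent f)) = 0"
    using the_int_of_int[of 0] by simp
  have l: "Poly_Mapping.lookup (prim f) t = the_int (of_int (den f) * Poly_Mapping.lookup f t / of_int (icontent f))"
    unfolding prim_def by (rule lookup_map_gen[where g="\<lambda>a. the_int (of_int (den f) * a / of_int (icontent f))"]) (use g0 in simp)
  show ?thesis
  proof (cases "t \<in> Poly_Mapping.keys f")
    case True
    obtain q where q: "M f t = icontent f * q" using icontent_dvd[OF True] by (auto elim: dvdE)
    have c: "icontent f \<noteq> 0" using icontent_pos[OF assms] by simp
    have "of_int (den f) * Poly_Mapping.lookup f t / of_int (icontent f) = (of_int q :: rat)"
      using M_eq[of f t] q c by (simp add: field_simps)
    then show ?thesis using l unfolding kprim_def by (simp add: field_simps)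
  next
    case False
    then show ?thesis using l g0 by (simp add: in_keys_iff)
  qed
qed

lemma iota_prim: "f \<noteq> 0 \<Longrightarrow> iota (prim f) = Poly_Mapping.single 0 (kprim f) * f"
  by (rule poly_mapping_eqI) (simp add: lookup_prim_rat)

lemma keys_prim: "f \<noteq> 0 \<Longrightarrow> Poly_Mapping.keys (prim f) = Poly_Mapping.keys f"
proof -
  assume f: "f \<noteq> 0"
  have "Poly_Mapping.keys (iota (prim f)) = Poly_Mapping.keys f"
    using kprim_nz[OF f] by (auto simp: iota_prim[OF f] in_keys_iff)
  then show ?thesis by simp
qed

lemma prim_nz: "f \<noteq> 0 \<Longrightarrow> prim f \<noteq> 0"
proof
  assume "f \<noteq> 0" "prim f = 0"
  then have "Poly_Mapping.keys f = {}" using keys_prim[of f] by simp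
  then show False using \<open>f \<noteq> 0\<close> by simp
qed

lemma keys_map_sub: "Poly_Mapping.keys (Poly_Mapping.map g f) \<subseteq> Poly_Mapping.keys f"
  by (auto simp: in_keys_iff Poly_Mapping.map.rep_eq when_def)

lemma prim_polys: assumes "f \<in> polys n" shows "prim f \<in> polys n"
proof -
  have "Poly_Mapping.keys (prim f) \<subseteq> Poly_Mapping.keys f" unfolding prim_def by (rule keys_map_sub)
  then show ?thesis using assms unfolding polys_def by auto
qed

lemma (in TOrd) lc_prim:
  assumes "f \<in> polys n" "f \<noteq> 0" "lc ord f = 1"
  shows "lt ord (prim f) = lt ord f" "lc ord (prim f) dvd den f" "lc ord (prim f) \<noteq> 0"
proof -
  show lt: "lt ord (prim f) = lt ord f" by (simp add: lt_def keys_prim[OF assms(2)])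
  have "(of_int (lc ord (prim f)) :: rat) = kprim f"
    using lookup_prim_rat[OF assms(2), of "lt ord f"] assms(3) lt by (simp add: lc_def)
  then have "(of_int (lc ord (prim f) * icontent f) :: rat) = of_int (den f)"
    using icontent_pos[OF assms(2)] unfolding kprim_def by simp
  then have e: "lc ord (prim f) * icontent f = den f" using of_int_eq_iff by blast
  then show "lc ord (prim f) dvd den f" by (rule dvdI[OF sym])
  show "lc ord (prim f) \<noteq> 0" using e den_pos[of f] by auto
qed

definition cd :: "rat mpoly \<Rightarrow> int mpoly" where
  "cd h = Poly_Mapping.map (\<lambda>a. the_int (of_int (den h) * a)) h"

lemma lookup_cd: "Poly_Mapping.lookup (cd h) t = M h t"
proof -
  have "Poly_Mapping.lookup (cd h) t = the_int (of_int (den h) * Poly_Mapping.lookup h t)"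
    unfolding cd_def by (rule lookup_map_gen) (use the_int_of_int[of 0] in simp)
  then show ?thesis by (simp add: M_def)
qed

lemma iota_cd: "iota (cd h) = Poly_Mapping.single 0 (of_int (den h)) * h"
  by (rule poly_mapping_eqI) (simp add: lookup_cd M_eq del: single_of_int)

lemma cd_polys: "h \<in> polys n \<Longrightarrow> cd h \<in> polys n"
proof -
  assume "h \<in> polys n"
  moreover have "Poly_Mapping.keys (cd h) \<subseteq> Poly_Mapping.keys h"
  proof
    fix t assume "t \<in> Poly_Mapping.keys (cd h)"
    then have "(of_int (den h) * Poly_Mapping.lookup h t :: rat) \<noteq> 0"
      using M_eq[of h t] by (auto simp: in_keys_iff lookup_cd)
    then show "t \<in> Poly_Mapping.keys h" by (auto simp: in_keys_iff)
  qed
  ultimately show ?thesis by (auto simp: polys_def)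
qed

lemma not_dvd_Lcm:
  fixes A :: "int set"
  assumes "prime p" "finite A" "\<forall>a\<in>A. \<not> int p dvd a"
  shows "\<not> int p dvd Lcm A"
proof
  assume "int p dvd Lcm A"
  moreover have "Lcm A dvd prod id A"
  proof (rule Lcm_least)
    fix b assume "b \<in> A" then show "b dvd prod id A" using dvd_prodI[OF assms(2), of b id] by simp
  qed
  ultimately have "int p dvd prod id A" by (rule dvd_trans)
  then show False using assms prime_dvd_prod_iff[of A "int p" id] by simp
qed

lemma pint_den_f:
  assumes "prime p" "\<forall>t. pint p (Poly_Mapping.lookup f t)"
  shows "\<not> int p dvd den f"
  unfolding den_def using assms by (intro not_dvd_Lcm) (auto simp: pint_den)

lemma den_set_iff:
  assumes "prime p" "finite G"
  shows "\<not> int p dvd den_set G \<longleftrightarrow> (\<forall>g\<in>G. \<not> int p dvd den g)"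
proof
  assume "\<not> int p dvd den_set G"
  moreover have "den g dvd den_set G" if "g \<in> G" for g
    unfolding den_set_def by (rule dvd_Lcm) (use that in simp)
  ultimately show "\<forall>g\<in>G. \<not> int p dvd den g" using dvd_trans by blast
next
  assume "\<forall>g\<in>G. \<not> int p dvd den g"
  then show "\<not> int p dvd den_set G" unfolding den_set_def using assms by (intro not_dvd_Lcm) auto
qed

lemma pp_dvd_trans: "pp_dvd a b \<Longrightarrow> pp_dvd b c \<Longrightarrow> pp_dvd a c"
  unfolding pp_dvd_def using le_trans by blast

lemma pp_dvd_refl: "pp_dvd a a"
  unfolding pp_dvd_def by simp

lemma keys_scale0: "Poly_Mapping.keys (Poly_Mapping.single 0 c * f) \<subseteq> Poly_Mapping.keys f"
  for f :: "'a::comm_ring_1 mpoly"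
  using keys_mult_single[of 0 c f] by simp

lemma lt_uminus: "lt ord (- f) = lt ord f" for f :: "'a::ab_group_add mpoly"
  by (simp add: lt_def keys_uminus_eq)

lemma lc_uminus: "lc ord (- f) = - lc ord f" for f :: "'a::ab_group_add mpoly"
  by (simp add: lc_def lt_uminus)

locale ZId = TOrd +
  fixes FZ :: "int mpoly set"
  assumes FZ_polys: "FZ \<subseteq> polys n"
begin

abbreviation I where "I \<equiv> ideal_gen n FZ"

lemma I_polys: "I \<subseteq> polys n" using ideal_polys[OF FZ_polys] .

definition hasT :: "pp \<Rightarrow> bool" where
  "hasT T \<longleftrightarrow> (\<exists>f\<in>I. f \<noteq> 0 \<and> lt ord f = T)"

definition dd :: "pp \<Rightarrow> nat" where
  "dd T = (LEAST m::nat. m > 0 \<and> (\<exists>f\<in>I. f \<noteq> 0 \<and> lt ord f = T \<and> lc ord f = int m))"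

lemma dd_props:
  assumes "hasT T"
  shows "dd T > 0" "\<exists>f\<in>I. f \<noteq> 0 \<and> lt ord f = T \<and> lc ord f = int (dd T)"
    "\<And>g. g \<in> I \<Longrightarrow> g \<noteq> 0 \<Longrightarrow> lt ord g = T \<Longrightarrow> int (dd T) dvd lc ord g"
proof -
  let ?P = "\<lambda>m::nat. m > 0 \<and> (\<exists>f\<in>I. f \<noteq> 0 \<and> lt ord f = T \<and> lc ord f = int m)"
  obtain f where f: "f \<in> I" "f \<noteq> 0" "lt ord f = T" using assms hasT_def by blast
  have fp: "f \<in> polys n" using f I_polys by blast
  have "\<exists>m. ?P m"
  proof (cases "lc ord f > 0")
    case True
    then show ?thesis using f by (intro exI[of _ "nat (lc ord f)"]) auto
  next
    case False
    then have "lc ord f < 0" using lc_nz[OF fp f(2)] by simp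
    moreover have "- f \<in> I" "- f \<noteq> 0" "lt ord (- f) = T" "lc ord (- f) = - lc ord f"
      using f ideal_uminus lt_uminus lc_uminus by auto
    ultimately have "?P (nat (- lc ord f))" by (intro conjI bexI[of _ "- f"]) auto
    then show ?thesis by blast
  qed
  then have Pd: "?P (dd T)" unfolding dd_def by (rule LeastI_ex)
  then show "dd T > 0" "\<exists>f\<in>I. f \<noteq> 0 \<and> lt ord f = T \<and> lc ord f = int (dd T)" by auto
  fix g assume g: "g \<in> I" "g \<noteq> 0" "lt ord g = T"
  obtain f0 where f0: "f0 \<in> I" "f0 \<noteq> 0" "lt ord f0 = T" "lc ord f0 = int (dd T)" using Pd by blast
  have f0p: "f0 \<in> polys n" and gp: "g \<in> polys n" using f0 g I_polys by auto
  have TP: "T \<in> PP n" using lt_PP gp g by blast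
  define d where "d = int (dd T)"
  have d: "d > 0" using Pd d_def by simp
  define a where "a = lc ord g"
  define h where "h = g - Poly_Mapping.single 0 (a div d) * f0"
  have hI: "h \<in> I" unfolding h_def
    using ideal_diff[OF g(1) ideal_mult[OF f0(1) polys_single[OF PP_zero]]] by simp
  have hp: "h \<in> polys n" using hI I_polys by blast
  have lh: "Poly_Mapping.lookup h T = a mod d"
  proof -
    have "Poly_Mapping.lookup h T = a - (a div d) * d"
      unfolding h_def using f0 g by (simp add: lookup_minus lc_def a_def d_def)
    then show ?thesis by (simp add: minus_div_mult_eq_mod)
  qed
  have kh: "\<forall>k\<in>Poly_Mapping.keys h. ord k T"
  proof
    fix k assume "k \<in> Poly_Mapping.keys h"
    then have "k \<in> Poly_Mapping.keys g \<or> k \<in> Poly_Mapping.keys f0"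
      unfolding h_def using keys_minus_sub keys_scale0 by blast
    then show "ord k T"
    proof
      assume "k \<in> Poly_Mapping.keys g" then show ?thesis using key_le_lt[OF gp] g(3) by blast
    next
      assume "k \<in> Poly_Mapping.keys f0" then show ?thesis using key_le_lt[OF f0p] f0(3) by blast
    qed
  qed
  show "int (dd T) dvd lc ord g"
  proof (rule ccontr)
    assume nd: "\<not> int (dd T) dvd lc ord g"
    then have r: "a mod d \<noteq> 0" using a_def d_def by (simp add: dvd_eq_mod_eq_0)
    then have "T \<in> Poly_Mapping.keys h" using lh by (simp add: in_keys_iff)
    then have lth: "lt ord h = T" using lt_eqI[OF hp _ kh] by blast
    have "a mod d \<ge> 0" "a mod d < d" using d by (simp_all add: pos_mod_sign pos_mod_bound)
    then have "a mod d > 0" "a mod d < d" using r by auto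
    moreover have "h \<noteq> 0" using \<open>T \<in> Poly_Mapping.keys h\<close> by auto
    ultimately have "?P (nat (a mod d))" using hI lth lh
      by (intro conjI bexI[of _ h]) (auto simp: lc_def)
    then have "dd T \<le> nat (a mod d)" unfolding dd_def by (rule Least_le)
    then have "int (dd T) \<le> a mod d" using \<open>a mod d > 0\<close> le_nat_iff[of "a mod d" "dd T"] by simp
    then show False using \<open>a mod d < d\<close> d_def by simp
  qed
qed

lemma dd_mono:
  assumes "hasT T'" "pp_dvd T' T" "T \<in> PP n"
  shows "hasT T" "dd T dvd dd T'"
proof -
  obtain f where f: "f \<in> I" "f \<noteq> 0" "lt ord f = T'" "lc ord f = int (dd T')" using dd_props(2)[OF assms(1)] by blast
  have fp: "f \<in> polys n" using f I_polys by blast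
  obtain u where u: "T = T' + u" using assms(2) pp_dvd_iff by blast
  have uP: "u \<in> PP n" using u assms(3) PP_summand by blast
  let ?g = "Poly_Mapping.single u 1 * f"
  have gI: "?g \<in> I" using ideal_mult[OF f(1) polys_single[OF uP]] .
  have g: "?g \<noteq> 0" "lt ord ?g = T" "lc ord ?g = int (dd T')"
    using lt_mult_single[OF fp f(2) uP, of 1] f u by (auto simp: add.commute)
  then show "hasT T" using gI hasT_def by blast
  have "int (dd T) dvd int (dd T')" using dd_props(3)[OF \<open>hasT T\<close> gI g(1,2)] g(3) by simp
  then show "dd T dvd dd T'" by simp
qed

definition new :: "pp \<Rightarrow> bool" where
  "new T \<longleftrightarrow> T \<in> PP n \<and> hasT T \<and> (\<forall>T'. pp_dvd T' T \<and> T' \<noteq> T \<and> hasT T' \<longrightarrow> dd T' \<noteq> dd T)"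

definition fT :: "pp \<Rightarrow> int mpoly" where
  "fT T = (SOME f. f \<in> I \<and> f \<noteq> 0 \<and> lt ord f = T \<and> lc ord f = int (dd T))"

lemma fT_props:
  assumes "hasT T"
  shows "fT T \<in> I" "fT T \<noteq> 0" "lt ord (fT T) = T" "lc ord (fT T) = int (dd T)"
proof -
  have "\<exists>f. f \<in> I \<and> f \<noteq> 0 \<and> lt ord f = T \<and> lc ord f = int (dd T)" using dd_props(2)[OF assms] by blast
  then have "fT T \<in> I \<and> fT T \<noteq> 0 \<and> lt ord (fT T) = T \<and> lc ord (fT T) = int (dd T)"
    unfolding fT_def by (rule someI_ex)
  then show "fT T \<in> I" "fT T \<noteq> 0" "lt ord (fT T) = T" "lc ord (fT T) = int (dd T)" by auto
qed

definition Gt :: "int mpoly set" where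
  "Gt = fT ` {T. new T}"

lemma Gt_I: "Gt \<subseteq> I" unfolding Gt_def new_def using fT_props by auto
lemma Gt_nz: "0 \<notin> Gt" unfolding Gt_def new_def using fT_props by fastforce
lemma Gt_polys: "Gt \<subseteq> polys n" using Gt_I I_polys by blast

lemma Gt_lc: "g \<in> Gt \<Longrightarrow> \<exists>T. hasT T \<and> lc ord g = int (dd T)"
  unfolding Gt_def new_def using fT_props by auto

lemma Gt_strong:
  assumes "f \<in> I" "f \<noteq> 0"
  shows "\<exists>g\<in>Gt. lm_dvd ord g f"
proof -
  have fp: "f \<in> polys n" using assms I_polys by blast
  define T where "T = lt ord f"
  have TP: "T \<in> PP n" using lt_PP fp assms T_def by blast
  have hT: "hasT T" using assms T_def hasT_def by blast
  define S where "S = {T'. T' \<in> PP n \<and> pp_dvd T' T \<and> hasT T' \<and> dd T' = dd T}"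
  have "T \<in> S" using TP hT pp_dvd_refl S_def by blast
  then obtain T0 where T0: "T0 \<in> S" "\<And>y. (y, T0) \<in> lessR \<Longrightarrow> y \<notin> S"
    using wfE_min[OF wf_lessR] by metis
  have T0P: "T0 \<in> PP n" "pp_dvd T0 T" "hasT T0" "dd T0 = dd T" using T0(1) S_def by auto
  have "new T0" unfolding new_def
  proof (intro conjI allI impI T0P)
    fix T' assume T': "pp_dvd T' T0 \<and> T' \<noteq> T0 \<and> hasT T'"
    show "dd T' \<noteq> dd T0"
    proof
      assume e: "dd T' = dd T0"
      obtain u where u: "T0 = T' + u" using T' pp_dvd_iff by blast
      have T'P: "T' \<in> PP n" using u T0P(1) PP_summand[of u T'] by (simp add: add.commute)
      have "T' \<in> S" using T'P T' T0P e pp_dvd_trans S_def by auto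
      moreover have "(T', T0) \<in> lessR" unfolding lessR_def lessO_def using T' T'P T0P to_dvd' by auto
      ultimately show False using T0(2) by blast
    qed
  qed
  then have gG: "fT T0 \<in> Gt" unfolding Gt_def by blast
  have "lc ord (fT T0) dvd lc ord f"
    using fT_props(4)[OF T0P(3)] T0P(4) dd_props(3)[OF hT assms] T_def by simp
  moreover have "pp_dvd (lt ord (fT T0)) (lt ord f)" using fT_props(3)[OF T0P(3)] T0P(2) T_def by simp
  ultimately show ?thesis using gG unfolding lm_dvd_def by blast
qed

lemma Gt_min:
  assumes "g \<in> Gt" "g' \<in> Gt" "g \<noteq> g'"
  shows "\<not> lm_dvd ord g g'"
proof
  assume ld: "lm_dvd ord g g'"
  obtain T1 T2 where T: "new T1" "new T2" "g = fT T1" "g' = fT T2" using assms Gt_def by auto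
  then have "T1 \<noteq> T2" using assms(3) by blast
  have h: "hasT T1" "hasT T2" "T1 \<in> PP n" "T2 \<in> PP n" using T new_def by auto
  have "int (dd T1) dvd int (dd T2)" "pp_dvd T1 T2"
    using ld fT_props[OF h(1)] fT_props[OF h(2)] T unfolding lm_dvd_def by auto
  then have "dd T1 dvd dd T2" by simp
  moreover have "dd T2 dvd dd T1" using dd_mono(2)[OF h(1) \<open>pp_dvd T1 T2\<close> h(4)] .
  ultimately have "dd T1 = dd T2" using dvd_antisym by blast
  then show False using T(2) \<open>T1 \<noteq> T2\<close> \<open>pp_dvd T1 T2\<close> h(1) new_def by blast
qed

lemma new_finite: "finite {T. new T}"
proof (rule ccontr)
  assume inf: "infinite {T. new T}"
  obtain F :: "nat \<Rightarrow> pp" where F: "inj F" "range F \<subseteq> {T. new T}"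
    using infinite_iff_countable_subset[THEN iffD1, OF inf] by blast
  have nF: "new (F i)" for i using F(2) by blast
  have PF: "F i \<in> PP n" for i using nF new_def by blast
  obtain H where H: "infinite H" "\<forall>i\<in>H. \<forall>j\<in>H. i < j \<longrightarrow> pp_dvd (F i) (F j)"
    using dickson[of UNIV F n] PF by blast
  have "\<forall>i\<in>H. \<forall>j\<in>H. i < j \<longrightarrow> dd (F j) < dd (F i)"
  proof (intro ballI impI)
    fix i j assume ij: "i \<in> H" "j \<in> H" "i < j"
    have hi: "hasT (F i)" using nF new_def by blast
    have dv: "pp_dvd (F i) (F j)" using H ij by blast
    have "dd (F j) dvd dd (F i)" using dd_mono(2)[OF hi dv PF] .
    moreover have "F i \<noteq> F j" using F(1) ij by (auto dest: injD)
    then have "dd (F i) \<noteq> dd (F j)" using nF[of j] hi dv unfolding new_def by blast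
    moreover have "dd (F i) > 0" using dd_props(1)[OF hi] .
    ultimately show "dd (F j) < dd (F i)" using dvd_imp_le le_neq_implies_less by metis
  qed
  then show False using no_desc_nat[OF H(1), where g="\<lambda>i. dd (F i)"] by blast
qed

lemma Gt_finite: "finite Gt" unfolding Gt_def using new_finite by simp

lemma I_in_Gt: "f \<in> I \<Longrightarrow> f \<in> ideal_gen n Gt"
proof -
  have "\<forall>f. f \<in> I \<and> f \<noteq> 0 \<and> lt ord f = T \<longrightarrow> f \<in> ideal_gen n Gt" for T
  proof (induction T rule: wf_induct[OF wf_lessR])
    case (1 T)
    show ?case
    proof (intro allI impI)
      fix f assume f: "f \<in> I \<and> f \<noteq> 0 \<and> lt ord f = T"
      have fp: "f \<in> polys n" using f I_polys by blast
      have TP: "T \<in> PP n" using lt_PP fp f by blast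
      obtain g where g: "g \<in> Gt" "lm_dvd ord g f" using Gt_strong f by blast
      have gp: "g \<in> polys n" "g \<noteq> 0" using g Gt_polys Gt_nz by auto
      obtain u where u: "T = lt ord g + u" using g(2) f unfolding lm_dvd_def pp_dvd_iff by blast
      have uP: "u \<in> PP n" using u TP PP_summand by blast
      have gtP: "lt ord g \<in> PP n" using lt_PP gp by blast
      define q where "q = lc ord f div lc ord g"
      have q: "q * lc ord g = lc ord f" using g(2) unfolding lm_dvd_def q_def by simp
      define f' where "f' = f - Poly_Mapping.single u q * g"
      have f'I: "f' \<in> I" unfolding f'_def using ideal_diff[OF _ ideal_mult[OF _ polys_single[OF uP]]] f g(1) Gt_I by blast
      have f'p: "f' \<in> polys n" using f'I I_polys by blast
      have eq: "f = f' + Poly_Mapping.single u q * g" unfolding f'_def by simp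
      show "f \<in> ideal_gen n Gt"
      proof (cases "f' = 0")
        case True
        then have "0 + Poly_Mapping.single u q * g \<in> ideal_gen n Gt"
          by (intro ideal_gen.step ideal_gen.zero polys_single uP g(1))
        then show ?thesis using eq True by simp
      next
        case False
        have kf': "\<forall>k\<in>Poly_Mapping.keys f'. ord k T"
        proof
          fix k assume "k \<in> Poly_Mapping.keys f'"
          then have "k \<in> Poly_Mapping.keys f \<or> k \<in> Poly_Mapping.keys (Poly_Mapping.single u q * g)"
            unfolding f'_def using keys_minus_sub by blast
          then show "ord k T"
          proof
            assume "k \<in> Poly_Mapping.keys f" then show ?thesis using key_le_lt[OF fp] f by blast
          next
            assume "k \<in> Poly_Mapping.keys (Poly_Mapping.single u q * g)"
            then obtain t where t: "t \<in> Poly_Mapping.keys g" "k = u + t" using keys_mult_single by blast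
            have "t \<in> PP n" using t gp keys_polys by blast
            then have "ord (u + t) (u + lt ord g)" using to_mono[OF _ gtP uP] key_le_lt[OF gp(1) t(1)] by blast
            then show ?thesis using t u by (simp add: add.commute)
          qed
        qed
        have "Poly_Mapping.lookup f' T = lc ord f - q * lc ord g"
          unfolding f'_def using u f by (simp add: lookup_minus lc_def add.commute[of "lt ord g" u])
        then have "Poly_Mapping.lookup f' T = 0" using q by simp
        then have "lessO (lt ord f') T" using cancel_lt[OF f'p TP kf' _ False] by blast
        moreover have "lt ord f' \<in> PP n" using lt_PP f'p False by blast
        ultimately have "(lt ord f', T) \<in> lessR" using TP lessR_def by blast
        then have "f' \<in> ideal_gen n Gt" using 1 f'I False by blast
        then have "f' + Poly_Mapping.single u q * g \<in> ideal_gen n Gt"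
          by (intro ideal_gen.step polys_single uP g(1))
        then show ?thesis using eq by simp
      qed
    qed
  qed
  then show "f \<in> I \<Longrightarrow> f \<in> ideal_gen n Gt" by (cases "f = 0") (auto intro: ideal_gen.zero)
qed

lemma Gt_minimal: "minimal_strong_GB n ord Gt I"
proof -
  have "ideal_gen n Gt \<subseteq> I" using ideal_gen_mono[OF Gt_I] .
  moreover have "I \<subseteq> ideal_gen n Gt" using I_in_Gt by blast
  ultimately have "ideal_gen n Gt = I" by blast
  then show ?thesis unfolding minimal_strong_GB_def strong_GB_def
    using Gt_finite Gt_nz Gt_polys Gt_strong Gt_min by blast
qed

end

locale MainL = TOrd +
  fixes FF GG :: "rat mpoly set" and p :: nat
  assumes FF_polys: "FF \<subseteq> polys n" and red: "reduced_GB n ord GG (ideal_gen n FF)" and pr: "prime p"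
begin

lemma GG_props: "finite GG" "0 \<notin> GG" "GG \<subseteq> polys n" "ideal_gen n GG = ideal_gen n FF"
  "\<And>f. f \<in> ideal_gen n FF \<Longrightarrow> f \<noteq> 0 \<Longrightarrow> \<exists>g\<in>GG. lm_dvd ord g f"
  "\<And>g. g \<in> GG \<Longrightarrow> lc ord g = 1"
  "\<And>g g' t. g \<in> GG \<Longrightarrow> g' \<in> GG \<Longrightarrow> g \<noteq> g' \<Longrightarrow> t \<in> Poly_Mapping.keys g \<Longrightarrow> \<not> pp_dvd (lt ord g') t"
  using red unfolding reduced_GB_def strong_GB_def by blast+

abbreviation IQ where "IQ \<equiv> ideal_gen n GG"

lemma IQ_polys: "IQ \<subseteq> polys n" using ideal_polys[OF GG_props(3)] .

lemma IQ_strong: "f \<in> IQ \<Longrightarrow> f \<noteq> 0 \<Longrightarrow> \<exists>g\<in>GG. pp_dvd (lt ord g) (lt ord f)"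
  using GG_props(4,5) unfolding lm_dvd_def by blast

lemma primG_polys: "prim ` GG \<subseteq> polys n" using GG_props(3) prim_polys by blast

sublocale Z: ZId n ord "prim ` GG"
  by unfold_locales (rule primG_polys)

lemma iota_I: "f \<in> Z.I \<Longrightarrow> iota f \<in> IQ"
proof (induction f rule: ideal_gen.induct)
  case zero then show ?case by (simp add: ideal_gen.zero)
next
  case (step a h f)
  have hP: "h \<in> polys n" and aI: "iota a \<in> IQ" using step by blast+
  obtain g where g: "g \<in> GG" "f = prim g" using step by blast
  have g0: "g \<noteq> 0" using g GG_props(2) by blast
  have "iota (a + h * f) = iota a + (iota h * Poly_Mapping.single 0 (kprim g)) * g"
    using g iota_prim[OF g0] by (simp add: iota_add iota_mult mult.assoc)
  moreover have "iota h * Poly_Mapping.single 0 (kprim g) \<in> polys n"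
    using polys_mult[OF iota_polys[OF hP] polys_single[OF PP_zero]] .
  ultimately show ?case using aI g(1) by (simp add: ideal_gen.step)
qed

lemma single0_mult: "Poly_Mapping.single 0 a * Poly_Mapping.single 0 b = Poly_Mapping.single (0::pp) (a * b :: 'a::comm_ring_1)"
  by (simp add: mult_single)

lemma scale_IQ:
  assumes "q \<in> IQ"
  shows "\<exists>N::int. N \<noteq> 0 \<and> (\<exists>f\<in>Z.I. iota f = Poly_Mapping.single 0 (of_int N) * q)"
  using assms
proof (induction q rule: ideal_gen.induct)
  case zero
  then show ?case by (intro exI[of _ 1] conjI bexI[of _ 0]) (auto intro: ideal_gen.zero)
next
  case (step a h g)
  have hP: "h \<in> polys n" and gG: "g \<in> GG" using step by blast+
  obtain Na fa where Na: "Na \<noteq> 0" "fa \<in> Z.I" "iota fa = Poly_Mapping.single 0 (of_int Na) * a" using step by blast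
  have g0: "g \<noteq> 0" using step GG_props(2) by blast
  define D where "D = den h"
  define dg where "dg = den g"
  define c where "c = icontent g"
  have D: "D \<noteq> 0" "dg \<noteq> 0" "c \<noteq> 0" using den_pos icontent_pos[OF g0] D_def dg_def c_def by (auto simp: less_le)
  let ?S = "\<lambda>x::rat. Poly_Mapping.single (0::pp) x"
  let ?SZ = "\<lambda>x::int. Poly_Mapping.single (0::pp) x"
  define f where "f = ?SZ (D * dg) * fa + (?SZ (Na * c) * cd h) * prim g"
  have fI: "f \<in> Z.I" unfolding f_def
    using ideal_add[OF ideal_mult[OF Na(2) polys_single[OF PP_zero]]
        ideal_mult[OF ideal_gen_F polys_mult[OF polys_single[OF PP_zero] cd_polys[OF hP]]]] gG
    by blast
  have k: "kprim g * of_int c = of_int dg" unfolding kprim_def c_def dg_def using D(3) c_def by simp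
  have "iota f = ?S (of_int (D * dg)) * (?S (of_int Na) * a) + (?S (of_int (Na * c)) * (?S (of_int D) * h)) * (?S (kprim g) * g)"
    unfolding f_def by (simp add: iota_add iota_mult iota_single Na(3) iota_cd iota_prim[OF g0] D_def del: single_of_int)
  also have "\<dots> = (?S (of_int (D * dg)) * ?S (of_int Na)) * a + ((?S (of_int (Na * c)) * ?S (of_int D)) * ?S (kprim g)) * (h * g)"
    by (simp only: mult_ac)
  also have "\<dots> = ?S (of_int (D * dg * Na)) * a + ?S (of_int (Na * c) * of_int D * kprim g) * (h * g)"
    by (simp only: single0_mult of_int_mult)
  also have "of_int (Na * c) * of_int D * kprim g = (of_int (D * dg * Na) :: rat)"
    using k by (simp add: algebra_simps)
  also have "?S (of_int (D * dg * Na)) * a + ?S (of_int (D * dg * Na)) * (h * g) = ?S (of_int (D * dg * Na)) * (a + h * g)"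
    by (simp add: distrib_left)
  finally have "iota f = ?S (of_int (D * dg * Na)) * (a + h * g)" .
  moreover have "D * dg * Na \<noteq> 0" using D Na by simp
  ultimately show ?case using fI by blast
qed

end

context MainL
begin

lemma good_lucky:
  assumes good: "\<forall>g\<in>GG. \<not> int p dvd den g"
  shows "pauer_lucky n ord (prim ` GG) p"
proof -
  have "\<forall>gt\<in>Z.Gt. \<not> int p dvd lc ord gt"
  proof
    fix gt assume "gt \<in> Z.Gt"
    then obtain T where T: "Z.hasT T" "lc ord gt = int (Z.dd T)" using Z.Gt_lc by blast
    then obtain f where f: "f \<in> Z.I" "f \<noteq> 0" "lt ord f = T" using Z.hasT_def by blast
    have fp: "f \<in> polys n" using f Z.I_polys by blast
    have TP: "T \<in> PP n" using lt_PP fp f by blast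
    have "iota f \<in> IQ" "iota f \<noteq> 0" "lt ord (iota f) = T" using iota_I f lt_iota[OF fp] by auto
    then obtain g where g: "g \<in> GG" "pp_dvd (lt ord g) T" using IQ_strong by metis
    have gp: "g \<in> polys n" "g \<noteq> 0" "lc ord g = 1" using g GG_props by auto
    obtain u where u: "T = lt ord g + u" using g pp_dvd_iff by blast
    have uP: "u \<in> PP n" using u TP PP_summand by blast
    have pg: "prim g \<in> polys n" "prim g \<noteq> 0" using prim_polys gp prim_nz by auto
    note lp = lc_prim[OF gp]
    let ?e = "Poly_Mapping.single u 1 * prim g"
    have eI: "?e \<in> Z.I" using ideal_mult[OF ideal_gen_F polys_single[OF uP]] g(1) by blast
    have e: "?e \<noteq> 0" "lt ord ?e = T" "lc ord ?e = lc ord (prim g)"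
      using lt_mult_single[OF pg uP, of 1] lp u by (auto simp: add.commute)
    have "int (Z.dd T) dvd lc ord (prim g)" using Z.dd_props(3)[OF T(1) eI e(1,2)] e(3) by simp
    then have "int (Z.dd T) dvd den g" using lp(2) dvd_trans by blast
    then show "\<not> int p dvd lc ord gt" using T(2) good g(1) dvd_trans by metis
  qed
  then show ?thesis unfolding pauer_lucky_def using Z.Gt_minimal by blast
qed


lemma lc_zero: "lc ord (0::rat mpoly) = 0" by (simp add: lc_def)

lemma lucky_good:
  assumes lucky: "pauer_lucky n ord (prim ` GG) p"
  shows "\<forall>g\<in>GG. \<not> int p dvd den g"
proof -
  obtain Gt' where min: "minimal_strong_GB n ord Gt' Z.I" and nd: "\<forall>g\<in>Gt'. \<not> int p dvd lc ord g"
    using lucky unfolding pauer_lucky_def by blast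
  have Gt'p: "Gt' \<subseteq> polys n" "0 \<notin> Gt'" "ideal_gen n Gt' = Z.I"
    "\<And>f. f \<in> Z.I \<Longrightarrow> f \<noteq> 0 \<Longrightarrow> \<exists>g\<in>Gt'. lm_dvd ord g f"
    using min unfolding minimal_strong_GB_def strong_GB_def by blast+
  have Gt'I: "Gt' \<subseteq> Z.I" using Gt'p(3) ideal_gen_F by blast
  have E: "\<exists>e. e \<in> IQ \<and> lt ord e = lt ord q \<and> lc ord e = 1 \<and> (\<forall>t. pint p (Poly_Mapping.lookup e t))"
    if q: "q \<in> IQ" "q \<noteq> 0" for q
  proof -
    have qp: "q \<in> polys n" using q IQ_polys by blast
    obtain N f where Nf: "N \<noteq> 0" "f \<in> Z.I" "iota f = Poly_Mapping.single 0 (of_int N) * q"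
      using scale_IQ[OF q(1)] by blast
    have fp: "f \<in> polys n" using Nf Z.I_polys by blast
    have "Poly_Mapping.single 0 (of_int N) * q \<noteq> 0" "lt ord (Poly_Mapping.single 0 (of_int N) * q) = 0 + lt ord q"
      using lt_mult_single[OF qp q(2) PP_zero, of "of_int N"] Nf(1) by auto
    then have f0: "f \<noteq> 0" and ltf: "lt ord f = lt ord q" using Nf(3) lt_iota[OF fp] by auto
    obtain gt where gt: "gt \<in> Gt'" "lm_dvd ord gt f" using Gt'p(4)[OF Nf(2) f0] by blast
    have gtp: "gt \<in> Z.I" "gt \<in> polys n" "gt \<noteq> 0" using gt Gt'I Gt'p by auto
    define T where "T = lt ord q"
    have TP: "T \<in> PP n" using lt_PP qp q T_def by blast
    obtain u where u: "T = lt ord gt + u" using gt ltf T_def unfolding lm_dvd_def pp_dvd_iff by auto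
    have uP: "u \<in> PP n" using u TP PP_summand by blast
    define L where "L = lc ord gt"
    have L: "L \<noteq> 0" "\<not> int p dvd L" using L_def lc_nz gtp nd gt(1) by auto
    let ?e = "Poly_Mapping.single u (1 / of_int L) * iota gt"
    have eI: "?e \<in> IQ" using ideal_mult[OF iota_I[OF gtp(1)] polys_single[OF uP]] .
    have ig: "iota gt \<in> polys n" "iota gt \<noteq> 0" using iota_polys gtp by auto
    have "lt ord ?e = u + lt ord (iota gt)" "lc ord ?e = (1 / of_int L) * lc ord (iota gt)"
      using lt_mult_single[OF ig uP] L(1) by auto
    then have e: "lt ord ?e = T" "lc ord ?e = 1"
      using lt_iota[OF gtp(2)] lc_iota[OF gtp(2)] u L(1) L_def by (auto simp: add.commute)
    have "pint p (Poly_Mapping.lookup ?e t)" for t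
    proof -
      have "pint p (of_int (Poly_Mapping.lookup gt (t - u)) / of_int L)"
        using pint_div_int[OF pr pint_int[OF pr] L] by blast
      moreover have "pint p 0" using pint_int[OF pr, of 0] by simp
      ultimately show ?thesis by (simp add: lookup_mult_single)
    qed
    then show ?thesis using eI e T_def by blast
  qed
  show ?thesis
  proof
    fix g assume gG: "g \<in> GG"
    have gp: "g \<in> polys n" "g \<noteq> 0" "lc ord g = 1" using gG GG_props by auto
    have gI: "g \<in> IQ" using ideal_gen_F gG by blast
    define T where "T = lt ord g"
    have TP: "T \<in> PP n" using lt_PP gp T_def by blast
    have claim: "\<forall>e. e \<in> IQ \<and> lt ord e = T \<and> lc ord e = 1 \<and> (\<forall>t. pint p (Poly_Mapping.lookup e t))
        \<and> e - g \<noteq> 0 \<and> lt ord (e - g) = T' \<longrightarrow> (\<forall>t. pint p (Poly_Mapping.lookup g t))" for T'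
    proof (induction T' rule: wf_induct[OF wf_lessR])
      case (1 T')
      show ?case
      proof (rule allI, rule impI)
        fix e assume eA: "e \<in> IQ \<and> lt ord e = T \<and> lc ord e = 1 \<and> (\<forall>t. pint p (Poly_Mapping.lookup e t))
          \<and> e - g \<noteq> 0 \<and> lt ord (e - g) = T'"
        define r where "r = e - g"
        have ep: "e \<in> polys n" using eA IQ_polys by blast
        have rI: "r \<in> IQ" unfolding r_def using ideal_diff gI eA by blast
        have rp: "r \<in> polys n" using rI IQ_polys by blast
        have r0: "r \<noteq> 0" "lt ord r = T'" using eA r_def by auto
        have kr: "\<forall>k\<in>Poly_Mapping.keys r. ord k T"
        proof
          fix k assume "k \<in> Poly_Mapping.keys r"
          then have "k \<in> Poly_Mapping.keys e \<or> k \<in> Poly_Mapping.keys g" unfolding r_def using keys_minus_sub by blast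
          then show "ord k T"
          proof
            assume "k \<in> Poly_Mapping.keys e" then show ?thesis using key_le_lt[OF ep] eA by blast
          next
            assume "k \<in> Poly_Mapping.keys g" then show ?thesis using key_le_lt[OF gp(1)] T_def by blast
          qed
        qed
        have "Poly_Mapping.lookup r T = lc ord e - lc ord g" unfolding r_def using eA T_def by (simp add: lookup_minus lc_def)
        then have "Poly_Mapping.lookup r T = 0" using eA gp by simp
        then have lT': "lessO T' T" using cancel_lt[OF rp TP kr _ r0(1)] r0(2) by blast
        have T'P: "T' \<in> PP n" using lt_PP rp r0 by blast
        obtain g' where g': "g' \<in> GG" "pp_dvd (lt ord g') T'" using IQ_strong[OF rI r0(1)] r0(2) by blast
        have lgT': "Poly_Mapping.lookup g T' = 0"
        proof (rule ccontr)
          assume "Poly_Mapping.lookup g T' \<noteq> 0"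
          then have T'k: "T' \<in> Poly_Mapping.keys g" by (simp add: in_keys_iff)
          show False
          proof (cases "g' = g")
            case True
            then have "ord T T'" using g' to_dvd'[OF _ T'P] T_def by blast
            then show False using lT' lessO_not_ord[OF T'P TP] by blast
          next
            case False
            then show False using GG_props(7)[OF gG g'(1) _ T'k] g'(2) by blast
          qed
        qed
        define c where "c = Poly_Mapping.lookup e T'"
        have rc: "Poly_Mapping.lookup r T' = c" unfolding r_def c_def using lgT' by (simp add: lookup_minus)
        have pc: "pint p c" using eA c_def by blast
        obtain e' where e': "e' \<in> IQ" "lt ord e' = T'" "lc ord e' = 1" "\<forall>t. pint p (Poly_Mapping.lookup e' t)"
          using E[OF rI r0(1)] r0(2) by blast
        have e'p: "e' \<in> polys n" using e' IQ_polys by blast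
        have ke': "\<forall>k\<in>Poly_Mapping.keys e'. ord k T' \<and> lessO k T"
        proof
          fix k assume k: "k \<in> Poly_Mapping.keys e'"
          then have "ord k T'" using key_le_lt[OF e'p] e'(2) by blast
          moreover have "k \<in> PP n" using k e'p keys_polys by blast
          ultimately show "ord k T' \<and> lessO k T" using ord_lessO_trans[OF _ T'P TP _ lT'] by blast
        qed
        then have "T \<notin> Poly_Mapping.keys e'" unfolding lessO_def by blast
        then have le'T: "Poly_Mapping.lookup e' T = 0" by (simp add: in_keys_iff)
        define en where "en = e - Poly_Mapping.single 0 c * e'"
        have enI: "en \<in> IQ" unfolding en_def using ideal_diff[OF _ ideal_mult[OF e'(1) polys_single[OF PP_zero]]] eA by blast
        have enp: "en \<in> polys n" using enI IQ_polys by blast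
        have pen: "\<forall>t. pint p (Poly_Mapping.lookup en t)"
          unfolding en_def using pint_diff[OF pr] pint_mult[OF pr] pc eA e'(4) by (simp add: lookup_minus)
        have "lc ord e = 1" "lt ord e = T" using eA by auto
        then have leT: "Poly_Mapping.lookup e T = 1" unfolding lc_def by simp
        have lenT: "Poly_Mapping.lookup en T = 1"
          unfolding en_def using le'T leT by (simp add: lookup_minus)
        have ken: "\<forall>k\<in>Poly_Mapping.keys en. ord k T"
        proof
          fix k assume "k \<in> Poly_Mapping.keys en"
          then have "k \<in> Poly_Mapping.keys e \<or> k \<in> Poly_Mapping.keys e'"
            unfolding en_def using keys_minus_sub keys_scale0 by blast
          then show "ord k T"
          proof
            assume "k \<in> Poly_Mapping.keys e" then show ?thesis using key_le_lt[OF ep] eA by blast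
          next
            assume "k \<in> Poly_Mapping.keys e'" then show ?thesis using ke' unfolding lessO_def by blast
          qed
        qed
        have Tk: "T \<in> Poly_Mapping.keys en" using lenT by (simp add: in_keys_iff)
        have ltn: "lt ord en = T" using lt_eqI[OF enp Tk ken] .
        have lcn: "lc ord en = 1" using ltn lenT by (simp add: lc_def)
        define rn where "rn = en - g"
        have rn_eq: "rn = r - Poly_Mapping.single 0 c * e'" unfolding rn_def en_def r_def by (simp add: algebra_simps)
        show "\<forall>t. pint p (Poly_Mapping.lookup g t)"
        proof (cases "rn = 0")
          case True
          then have "g = en" unfolding rn_def by simp
          then show ?thesis using pen by simp
        next
          case False
          have rnp: "rn \<in> polys n" unfolding rn_def using polys_minus[OF enp gp(1)] .
          have krn: "\<forall>k\<in>Poly_Mapping.keys rn. ord k T'"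
          proof
            fix k assume "k \<in> Poly_Mapping.keys rn"
            then have "k \<in> Poly_Mapping.keys r \<or> k \<in> Poly_Mapping.keys e'"
              unfolding rn_eq using keys_minus_sub keys_scale0 by blast
            then show "ord k T'"
            proof
              assume "k \<in> Poly_Mapping.keys r" then show ?thesis using key_le_lt[OF rp] r0 by blast
            next
              assume "k \<in> Poly_Mapping.keys e'" then show ?thesis using ke' by blast
            qed
          qed
          have "Poly_Mapping.lookup rn T' = c - c * lc ord e'"
            unfolding rn_eq using rc e'(2) by (simp add: lookup_minus lc_def)
          then have "Poly_Mapping.lookup rn T' = 0" using e'(3) by simp
          then have "lessO (lt ord rn) T'" using cancel_lt[OF rnp T'P krn _ False] by blast
          moreover have "lt ord rn \<in> PP n" using lt_PP rnp False by blast
          ultimately have "(lt ord rn, T') \<in> lessR" using T'P lessR_def by blast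
          then show ?thesis using 1 enI ltn lcn pen False rn_def by blast
        qed
      qed
    qed
    obtain e0 where e0: "e0 \<in> IQ" "lt ord e0 = T" "lc ord e0 = 1" "\<forall>t. pint p (Poly_Mapping.lookup e0 t)"
      using E[OF gI gp(2)] T_def by blast
    have "\<forall>t. pint p (Poly_Mapping.lookup g t)"
    proof (cases "e0 - g = 0")
      case True then show ?thesis using e0 by simp
    next
      case False then show ?thesis using claim e0 by blast
    qed
    then show "\<not> int p dvd den g" using pint_den_f[OF pr] by blast
  qed
qed

end

context MainL
begin

lemma main_equiv: "pauer_lucky n ord (prim ` GG) p \<longleftrightarrow> sigma_good GG p"
  unfolding sigma_good_def using den_set_iff[OF pr GG_props(1)] good_lucky lucky_good by blast

end

theorem corollary3p19:
  fixes n :: nat and ord :: "pp \<Rightarrow> pp \<Rightarrow> bool"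
    and F G :: "rat mpoly set" and p :: nat
  assumes "term_order n ord"
    and "F \<subseteq> polys n" and "0 \<notin> F"
    and "reduced_GB n ord G (ideal_gen n F)"
    and "prime p"
  shows "pauer_lucky n ord (prim ` G) p \<longleftrightarrow> sigma_good G p"
proof -
  interpret M: MainL n ord F G p
    using assms by (simp add: MainL_def MainL_axioms_def TOrd_def)
  show ?thesis by (rule M.main_equiv)
qed

end
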